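(* Let $r\ge1$ be an integer, let $\mathscr C$ be a class of graphs with sub-exponential expansion, and for every integer $p\ge2$ let $g(p)$ be an integer such that every graph in $\mathscr C$ with girth at least $g(p)$ is $p$-path degenerate. Then for every $G\in\mathscr C$: (i) if $q$ is an integer with $r<q<2r$ and $\mathrm{girth}(G)\ge g(2q)$, then $\mathrm{wcol}_r(G)\le r+2+\left\lfloor\log_2\!\left(\frac{q-1}{q-r}\right)\right\rfloor$; (ii) if $\mathrm{girth}(G)\ge g(4r)$, then $\mathrm{wcol}_r(G)\le r+2$.
   Context: Graphs are finite and simple; the girth is the length of a shortest cycle. A strict ear of a graph $G$ is a path of $G$ whose internal vertices all have degree $2$ in $G$ and whose two endpoints are distinct. For an integer $p\ge1$, a $p$-reduction of $G$ is the deletion of either an isolated vertex, or a vertex of degree $1$, or the internal vertices of a strict ear of $G$ of length at least $p$. A graph is $p$-path degenerate if it can be reduced to the empty graph by a sequence of $p$-reductions. For a linear order $\pi$ of $V(G)$, $u$ is weakly $r$-reachable from $v$ if $u\le_\pi v$ and there is a $u$–$v$ path $P$ of length at most $r$ with $u<_\pi w$ for every internal vertex $w$ of $P$; $\mathrm{WReach}_r[G,\pi,v]$ is the set of such $u$, and $\mathrm{wcol}_r(G)=\min_{\pi}\max_{v\in V(G)}|\mathrm{WReach}_r[G,\pi,v]|$. A class $\mathscr C$ has sub-exponential expansion if $\sup\{\nabla_r(G):G\in\mathscr C\}=2^{o(r)}$, where $\nabla_r(G)$ is the maximum of $|E(H)|/|V(H)|$ over nonempty shallow minors $H$ of $G$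 at depth $r$ (minors obtained by contracting vertex-disjoint subgraphs of radius at most $r$ and deleting vertices and edges). *)

theory Defs
  imports Complex_Main "HOL-Library.Extended_Nat"
begin

type_synonym 'a graph = "'a set \<times> 'a set set"

definition verts :: "'a graph \<Rightarrow> 'a set" where "verts G = fst G"
definition edges :: "'a graph \<Rightarrow> 'a set set" where "edges G = snd G"

definition wf_graph :: "'a graph \<Rightarrow> bool" where
  "wf_graph G \<longleftrightarrow> finite (verts G) \<and>
     edges G \<subseteq> {{u, v} | u v. u \<in> verts G \<and> v \<in> verts G \<and> u \<noteq> v}"

definition adj :: "'a graph \<Rightarrow> 'a \<Rightarrow> 'a \<Rightarrow> bool" where
  "adj G u v \<longleftrightarrow> {u, v} \<in> edges G \<and> u \<noteq> v"

definition degree :: "'a graph \<Rightarrow> 'a \<Rightarrow> nat" where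
  "degree G v = card {u \<in> verts G. adj G v u}"

text \<open>A path is a nonempty list of distinct vertices, consecutive ones adjacent;
  its length is the number of edges, i.e. length xs - 1.\<close>
definition is_path :: "'a graph \<Rightarrow> 'a list \<Rightarrow> bool" where
  "is_path G xs \<longleftrightarrow> xs \<noteq> [] \<and> distinct xs \<and> set xs \<subseteq> verts G \<and>
     (\<forall>i. Suc i < length xs \<longrightarrow> adj G (xs ! i) (xs ! Suc i))"

definition is_cycle :: "'a graph \<Rightarrow> 'a list \<Rightarrow> bool" where
  "is_cycle G xs \<longleftrightarrow> length xs \<ge> 3 \<and> is_path G xs \<and> adj G (last xs) (hd xs)"

text \<open>Girth: length of a shortest cycle (infinity if acyclic).\<close>
definition girth :: "'a graph \<Rightarrow> enat" where
  "girth G = Inf {enat (length xs) | xs. is_cycle G xs}"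

definition del_verts :: "'a graph \<Rightarrow> 'a set \<Rightarrow> 'a graph" where
  "del_verts G S = (verts G - S, {e \<in> edges G. e \<inter> S = {}})"

definition induced :: "'a graph \<Rightarrow> 'a set \<Rightarrow> 'a graph" where
  "induced G X = (X, {e \<in> edges G. e \<subseteq> X})"

definition internal :: "'a list \<Rightarrow> 'a set" where
  "internal xs = set (butlast (tl xs))"

definition strict_ear :: "'a graph \<Rightarrow> 'a list \<Rightarrow> bool" where
  "strict_ear G xs \<longleftrightarrow> is_path G xs \<and> hd xs \<noteq> last xs \<and>
     (\<forall>w \<in> internal xs. degree G w = 2)"

inductive p_reduction :: "nat \<Rightarrow> 'a graph \<Rightarrow> 'a graph \<Rightarrow> bool" for p where
  isolated: "v \<in> verts G \<Longrightarrow> degree G v = 0 \<Longrightarrow> p_reduction p G (del_verts G {v})"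
| leaf: "v \<in> verts G \<Longrightarrow> degree G v = 1 \<Longrightarrow> p_reduction p G (del_verts G {v})"
| ear: "strict_ear G xs \<Longrightarrow> length xs - 1 \<ge> p \<Longrightarrow>
          p_reduction p G (del_verts G (internal xs))"

definition p_path_degenerate :: "nat \<Rightarrow> 'a graph \<Rightarrow> bool" where
  "p_path_degenerate p G \<longleftrightarrow> (p_reduction p)\<^sup>*\<^sup>* G ({}, {})"

text \<open>Linear orders of V are represented by injections \<pi> : V \<rightarrow> nat,
  u \<le>_\<pi> v iff \<pi> u \<le> \<pi> v.\<close>
definition WReach :: "nat \<Rightarrow> 'a graph \<Rightarrow> ('a \<Rightarrow> nat) \<Rightarrow> 'a \<Rightarrow> 'a set" where
  "WReach r G \<pi> v = {u \<in> verts G. \<pi> u \<le> \<pi> v \<and>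
     (\<exists>xs. is_path G xs \<and> hd xs = u \<and> last xs = v \<and> length xs - 1 \<le> r \<and>
           (\<forall>w \<in> internal xs. \<pi> u < \<pi> w))}"

definition wcol :: "nat \<Rightarrow> 'a graph \<Rightarrow> nat" where
  "wcol r G = (LEAST k. \<exists>\<pi>. inj_on \<pi> (verts G) \<and>
       (\<forall>v \<in> verts G. card (WReach r G \<pi> v) \<le> k))"

text \<open>Branch sets of a depth-r shallow minor: nonempty vertex sets X such that
  G[X] has a centre from which every vertex of X is reachable within X by a path
  of length at most r (radius at most r, hence connected).\<close>
definition radius_le :: "'a graph \<Rightarrow> 'a set \<Rightarrow> nat \<Rightarrow> bool" where
  "radius_le G X r \<longleftrightarrow> (\<exists>c \<in> X. \<forall>x \<in> X. \<exists>xs. is_path (induced G X) xs \<and>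
      hd xs = c \<and> last xs = x \<and> length xs - 1 \<le> r)"

text \<open>A shallow minor of G at depth r, given by its set B of branch sets (vertices)
  and a set F of edges between branch sets joined by an edge of G.\<close>
definition shallow_minor :: "nat \<Rightarrow> 'a graph \<Rightarrow> 'a set set \<Rightarrow> 'a set set set \<Rightarrow> bool" where
  "shallow_minor r G B F \<longleftrightarrow>
     (\<forall>X \<in> B. X \<noteq> {} \<and> X \<subseteq> verts G \<and> radius_le G X r) \<and>
     (\<forall>X \<in> B. \<forall>Y \<in> B. X \<noteq> Y \<longrightarrow> X \<inter> Y = {}) \<and>
     F \<subseteq> {{X, Y} | X Y. X \<in> B \<and> Y \<in> B \<and> X \<noteq> Y \<and> (\<exists>x \<in> X. \<exists>y \<in> Y. adj G x y)}"

text \<open>\<nabla>_r(G): maximum edge density over nonempty depth-r shallow minors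
  (0 for the empty graph, which has none).\<close>
definition nabla :: "nat \<Rightarrow> 'a graph \<Rightarrow> real" where
  "nabla r G = Sup (insert 0 {real (card F) / real (card B) | B F.
       shallow_minor r G B F \<and> B \<noteq> {}})"

text \<open>Sub-exponential expansion: sup_{G\<in>C} \<nabla>_r(G) = 2^{o(r)}.\<close>
definition subexp_expansion :: "'a graph set \<Rightarrow> bool" where
  "subexp_expansion C \<longleftrightarrow> (\<forall>\<epsilon>>0. \<exists>R. \<forall>r\<ge>R. \<forall>G \<in> C. nabla r G \<le> 2 powr (\<epsilon> * real r))"

end

theory Submission
  imports Defs
begin



lemma adj_sym: "adj G u v = adj G v u"
  unfolding adj_def by (auto simp: insert_commute)

lemma internal_iff: "w \<in> internal xs \<longleftrightarrow> (\<exists>i. 0 < i \<and> i < length xs - 1 \<and> w = xs ! i)"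
proof
  assume "w \<in> internal xs"
  then obtain j where j: "j < length (butlast (tl xs))" "w = butlast (tl xs) ! j"
    unfolding internal_def by (auto simp: in_set_conv_nth)
  then have "w = xs ! Suc j" by (simp add: nth_butlast nth_tl)
  then show "\<exists>i. 0 < i \<and> i < length xs - 1 \<and> w = xs ! i" using j(1)
    by (intro exI[of _ "Suc j"]) simp
next
  assume "\<exists>i. 0 < i \<and> i < length xs - 1 \<and> w = xs ! i"
  then obtain i where i: "0 < i" "i < length xs - 1" "w = xs ! i" by blast
  then have "butlast (tl xs) ! (i - 1) = w" by (simp add: nth_butlast nth_tl)
  moreover have "i - 1 < length (butlast (tl xs))" using i by simp
  ultimately show "w \<in> internal xs" unfolding internal_def by (metis nth_mem)
qed

lemma path_adj: "is_path G xs \<Longrightarrow> Suc i < length xs \<Longrightarrow> adj G (xs ! i) (xs ! Suc i)"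
  unfolding is_path_def by auto

lemma path_vert: "is_path G xs \<Longrightarrow> i < length xs \<Longrightarrow> xs ! i \<in> verts G"
  unfolding is_path_def by auto

lemma path_distinct: "is_path G xs \<Longrightarrow> i < length xs \<Longrightarrow> j < length xs \<Longrightarrow> xs ! i = xs ! j \<Longrightarrow> i = j"
  unfolding is_path_def by (simp add: nth_eq_iff_index_eq)

lemma path_rev: "is_path G xs \<Longrightarrow> is_path G (rev xs)"
  unfolding is_path_def
proof (intro conjI allI impI; (elim conjE)?)
  fix i assume a: "xs \<noteq> []" "distinct xs" "set xs \<subseteq> verts G"
    "\<forall>i. Suc i < length xs \<longrightarrow> adj G (xs ! i) (xs ! Suc i)" "Suc i < length (rev xs)"
  then have "adj G (xs ! (length xs - Suc (Suc i))) (xs ! Suc (length xs - Suc (Suc i)))"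
    by simp
  moreover have "Suc (length xs - Suc (Suc i)) = length xs - Suc i" using a(5) by simp
  ultimately show "adj G (rev xs ! i) (rev xs ! Suc i)" using a(5)
    by (simp add: rev_nth adj_sym)
qed auto

lemma tl_rev': "tl (rev xs) = rev (butlast xs)"
  by (metis butlast_rev rev_rev_ident)

lemma internal_rev: "internal (rev xs) = internal xs"
  unfolding internal_def by (simp add: tl_rev' butlast_tl)




lemma verts_del: "verts (del_verts G S) = verts G - S"
  by (simp add: del_verts_def verts_def)

lemma adj_del: "adj (del_verts G S) x y \<longleftrightarrow> adj G x y \<and> x \<notin> S \<and> y \<notin> S"
  unfolding adj_def del_verts_def edges_def by auto

lemma path_del: "is_path G xs \<Longrightarrow> set xs \<inter> S = {} \<Longrightarrow> is_path (del_verts G S) xs"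
  unfolding is_path_def
  by (auto simp: verts_del adj_del) (meson Suc_lessD disjoint_iff nth_mem)+

lemma wf_del: "wf_graph G \<Longrightarrow> wf_graph (del_verts G S)"
proof -
  assume w: "wf_graph G"
  have sub: "edges (del_verts G S) \<subseteq> {{u, v} | u v. u \<in> verts (del_verts G S) \<and> v \<in> verts (del_verts G S) \<and> u \<noteq> v}"
  proof
    fix e assume "e \<in> edges (del_verts G S)"
    then have e: "e \<in> edges G" "e \<inter> S = {}" by (auto simp: del_verts_def edges_def)
    then obtain u v where "e = {u, v}" "u \<in> verts G" "v \<in> verts G" "u \<noteq> v"
      using w unfolding wf_graph_def by blast
    then show "e \<in> {{u, v} | u v. u \<in> verts (del_verts G S) \<and> v \<in> verts (del_verts G S) \<and> u \<noteq> v}"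
    proof (intro CollectI exI conjI)
      show "e = {u, v}" "u \<noteq> v" by fact+
      show "u \<in> verts (del_verts G S)" "v \<in> verts (del_verts G S)"
        using e(2) \<open>e = {u, v}\<close> \<open>u \<in> verts G\<close> \<open>v \<in> verts G\<close> by (auto simp: verts_del)
    qed
  qed
  have fin: "finite (verts (del_verts G S))" using w by (simp add: wf_graph_def verts_del)
  show ?thesis unfolding wf_graph_def using fin sub by (rule conjI)
qed

lemma nth_internal: "0 < k \<Longrightarrow> k < length zs - 1 \<Longrightarrow> zs ! k \<in> internal zs"
  unfolding internal_iff by (intro exI[of _ k]) simp

lemma internal_drop: "internal (drop k zs) \<subseteq> internal zs"
proof
  fix w assume "w \<in> internal (drop k zs)"
  then obtain i where i: "0 < i" "i < length (drop k zs) - 1" "w = drop k zs ! i"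
    unfolding internal_iff by blast
  have "zs ! (k + i) \<in> internal zs" using i by (intro nth_internal) auto
  then show "w \<in> internal zs" using i by simp
qed

lemma path_drop: "is_path G zs \<Longrightarrow> k < length zs \<Longrightarrow> is_path G (drop k zs)"
  unfolding is_path_def by (auto dest: in_set_dropD)

lemma deg_ge2:
  assumes "finite (verts G)" "is_path G xs" "0 < j" "j < length xs - 1"
  shows "degree G (xs ! j) \<ge> 2"
proof -
  have a1: "adj G (xs ! j) (xs ! (j - 1))"
    using path_adj[OF assms(2), of "j - 1"] assms by (simp add: adj_sym)
  have a2: "adj G (xs ! j) (xs ! Suc j)" using path_adj[OF assms(2), of j] assms by simp
  have ne: "xs ! (j - 1) \<noteq> xs ! Suc j"
  proof
    assume "xs ! (j - 1) = xs ! Suc j"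
    then have "j - 1 = Suc j" using path_distinct[OF assms(2), of "j - 1" "Suc j"] assms by simp
    then show False by simp
  qed
  have "{xs ! (j - 1), xs ! Suc j} \<subseteq> {u \<in> verts G. adj G (xs ! j) u}"
    using a1 a2 path_vert[OF assms(2)] assms by auto
  then have "card {xs ! (j - 1), xs ! Suc j} \<le> degree G (xs ! j)"
    unfolding degree_def by (rule card_mono[rotated]) (use assms(1) in auto)
  then show ?thesis using ne by simp
qed

lemma ear_nb:
  assumes "strict_ear G ys" "0 < i" "i < length ys - 1" "w \<in> verts G" "adj G (ys ! i) w"
  shows "w = ys ! (i - 1) \<or> w = ys ! Suc i"
proof (rule ccontr)
  assume c: "\<not> (w = ys ! (i - 1) \<or> w = ys ! Suc i)"
  have p: "is_path G ys" using assms(1) unfolding strict_ear_def by simp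
  have "ys ! i \<in> internal ys" using nth_internal[OF assms(2,3)] .
  moreover have "\<forall>w\<in>internal ys. degree G w = 2" using assms(1) unfolding strict_ear_def by simp
  ultimately have d: "degree G (ys ! i) = 2" by simp
  then have fin: "finite {u \<in> verts G. adj G (ys ! i) u}" unfolding degree_def
    by (metis card.infinite zero_neq_numeral)
  have a1: "adj G (ys ! i) (ys ! (i - 1))"
    using path_adj[OF p, of "i - 1"] assms by (simp add: adj_sym)
  have a2: "adj G (ys ! i) (ys ! Suc i)" using path_adj[OF p, of i] assms by simp
  have ne: "ys ! (i - 1) \<noteq> ys ! Suc i"
  proof
    assume "ys ! (i - 1) = ys ! Suc i"
    then have "i - 1 = Suc i" using path_distinct[OF p, of "i - 1" "Suc i"] assms by simp
    then show False by simp
  qed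
  have "{ys ! (i - 1), ys ! Suc i, w} \<subseteq> {u \<in> verts G. adj G (ys ! i) u}"
    using a1 a2 path_vert[OF p] assms by auto
  then have "card {ys ! (i - 1), ys ! Suc i, w} \<le> 2"
    using card_mono[OF fin] d unfolding degree_def by metis
  moreover have "card {ys ! (i - 1), ys ! Suc i, w} = 3" using ne c by (auto simp: card_insert_if)
  ultimately show False by simp
qed

lemma strict_ear_rev: "strict_ear G ys \<Longrightarrow> strict_ear G (rev ys)"
  unfolding strict_ear_def using path_rev[of G ys]
  by (simp add: internal_rev hd_rev last_rev) metis

lemma follow:
  assumes e: "strict_ear G ys" and p: "is_path G xs"
    and h: "xs ! j = ys ! i" "Suc j < length xs" "Suc i < length ys" "xs ! Suc j = ys ! Suc i"
  shows "i + t < length ys \<Longrightarrow> j + t < length xs \<Longrightarrow> xs ! (j + t) = ys ! (i + t)"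
proof -
  have claim: "i + Suc t < length ys \<longrightarrow> j + Suc t < length xs \<longrightarrow>
      xs ! (j + t) = ys ! (i + t) \<and> xs ! (j + Suc t) = ys ! (i + Suc t)" for t
  proof (induction t)
    case 0 then show ?case using h by simp
  next
    case (Suc t)
    show ?case
    proof (intro impI)
      assume l: "i + Suc (Suc t) < length ys" "j + Suc (Suc t) < length xs"
      then have IH: "xs ! (j + t) = ys ! (i + t)" "xs ! (j + Suc t) = ys ! (i + Suc t)"
        using Suc by auto
      have "adj G (xs ! (j + Suc t)) (xs ! Suc (j + Suc t))" using path_adj[OF p] l by simp
      then have "adj G (ys ! (i + Suc t)) (xs ! (j + Suc (Suc t)))" using IH by simp
      moreover have "xs ! (j + Suc (Suc t)) \<in> verts G" using path_vert[OF p] l by simp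
      ultimately have "xs ! (j + Suc (Suc t)) = ys ! (i + Suc t - 1) \<or>
          xs ! (j + Suc (Suc t)) = ys ! Suc (i + Suc t)"
        using ear_nb[OF e, of "i + Suc t"] l by simp
      moreover have "xs ! (j + Suc (Suc t)) \<noteq> xs ! (j + t)"
        using path_distinct[OF p, of "j + Suc (Suc t)" "j + t"] l by auto
      ultimately show "xs ! (j + Suc t) = ys ! (i + Suc t) \<and>
          xs ! (j + Suc (Suc t)) = ys ! (i + Suc (Suc t))" using IH by auto
    qed
  qed
  assume "i + t < length ys" "j + t < length xs"
  then show ?thesis
  proof (cases t)
    case 0 then show ?thesis using h by simp
  next
    case (Suc t') then show ?thesis using claim[of t'] \<open>i + t < length ys\<close> \<open>j + t < length xs\<close> by auto
  qed
qed

lemma dir: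
  assumes e: "strict_ear G ys" and p: "is_path G zs"
    and k: "0 < k" "k < length ys - 1" and hz: "hd zs = ys ! k" and l: "1 < length zs"
  shows "(zs ! 1 = ys ! Suc k \<and> (\<forall>t. t < length zs \<and> k + t < length ys \<longrightarrow> zs ! t = ys ! (k + t)))
       \<or> (zs ! 1 = ys ! (k - 1) \<and> (\<forall>t. t < length zs \<and> t \<le> k \<longrightarrow> zs ! t = ys ! (k - t)))"
proof -
  have zne: "zs \<noteq> []" using l by auto
  have z0: "zs ! 0 = ys ! k" using hz[unfolded hd_conv_nth[OF zne]] .
  have "adj G (zs ! 0) (zs ! 1)" using path_adj[OF p, of 0] l by simp
  moreover have "zs ! 1 \<in> verts G" using path_vert[OF p] l by simp
  ultimately have "zs ! 1 = ys ! (k - 1) \<or> zs ! 1 = ys ! Suc k"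
    using ear_nb[OF e k] z0 by simp
  then show ?thesis
  proof
    assume a: "zs ! 1 = ys ! Suc k"
    have "\<forall>t. t < length zs \<and> k + t < length ys \<longrightarrow> zs ! t = ys ! (k + t)"
      using follow[OF e p, of 0 k] z0 a k l by auto
    then show ?thesis using a by blast
  next
    assume a: "zs ! 1 = ys ! (k - 1)"
    let ?L = "length ys - 1"
    have e': "strict_ear G (rev ys)" using strict_ear_rev[OF e] .
    have r1: "rev ys ! (?L - k) = ys ! k" using k by (simp add: rev_nth)
    have ix: "length ys - Suc (Suc (length ys - Suc k)) = k - 1" using k by linarith
    have r2: "rev ys ! Suc (?L - k) = ys ! (k - 1)" using k
      by (simp add: rev_nth ix)
    have "\<forall>t. t < length zs \<and> t \<le> k \<longrightarrow> zs ! t = ys ! (k - t)"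
    proof (intro allI impI)
      fix t assume t: "t < length zs \<and> t \<le> k"
      have "zs ! (0 + t) = rev ys ! (?L - k + t)"
        using follow[OF e' p, of 0 "?L - k" t] z0 a r1 r2 k l t by auto
      moreover have "?L - k + t < length ys" "length ys - Suc (?L - k + t) = k - t" using k t by linarith+
      ultimately show "zs ! t = ys ! (k - t)" by (simp add: rev_nth)
    qed
    then show ?thesis using a by blast
  qed
qed

lemma reach_end:
  assumes e: "strict_ear G ys" and p: "is_path G zs"
    and k: "0 < k" "k < length ys - 1" and hz: "hd zs = ys ! k" and l: "1 < length zs"
    and lz: "last zs \<notin> internal ys"
  shows "(zs ! 1 = ys ! Suc k \<and> length ys - 1 - k \<le> length zs - 1)
       \<or> (zs ! 1 = ys ! (k - 1) \<and> k \<le> length zs - 1)"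
  using dir[OF e p k hz l]
proof
  assume a: "zs ! 1 = ys ! Suc k \<and> (\<forall>t. t < length zs \<and> k + t < length ys \<longrightarrow> zs ! t = ys ! (k + t))"
  have "length ys - 1 - k \<le> length zs - 1"
  proof (rule ccontr)
    assume nt: "\<not> ?thesis"
    have "last zs = zs ! (length zs - 1)" using l by (intro last_conv_nth) auto
    also have "\<dots> = ys ! (k + (length zs - 1))"
    proof -
      have "length zs - 1 < length zs \<and> k + (length zs - 1) < length ys" using l nt by linarith
      then show ?thesis using a by blast
    qed
    finally have "last zs = ys ! (k + (length zs - 1))" .
    moreover have "ys ! (k + (length zs - 1)) \<in> internal ys"
      using nt k l by (intro nth_internal) auto
    ultimately show False using lz by simp
  qed
  then show ?thesis using a by blast
next
  assume a: "zs ! 1 = ys ! (k - 1) \<and> (\<forall>t. t < length zs \<and> t \<le> k \<longrightarrow> zs ! t = ys ! (k - t))"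
  have "k \<le> length zs - 1"
  proof (rule ccontr)
    assume nt: "\<not> ?thesis"
    have "last zs = zs ! (length zs - 1)" using l by (intro last_conv_nth) auto
    also have "\<dots> = ys ! (k - (length zs - 1))"
    proof -
      have "length zs - 1 < length zs \<and> length zs - 1 \<le> k" using l nt by linarith
      then show ?thesis using a by blast
    qed
    finally have "last zs = ys ! (k - (length zs - 1))" .
    moreover have "ys ! (k - (length zs - 1)) \<in> internal ys"
      using nt k l by (intro nth_internal) auto
    ultimately show False using lz by simp
  qed
  then show ?thesis using a by blast
qed




lemma internal_sub: "internal xs \<subseteq> set xs"
  unfolding internal_def by (cases xs) (auto dest: in_set_butlastD)

lemma path_ends_not_internal:
  assumes "is_path G ys"
  shows "ys ! 0 \<notin> internal ys" "ys ! (length ys - 1) \<notin> internal ys"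
proof -
  have ne: "ys \<noteq> []" using assms unfolding is_path_def by simp
  show "ys ! 0 \<notin> internal ys"
  proof
    assume "ys ! 0 \<in> internal ys"
    then obtain i where i: "0 < i" "i < length ys - 1" "ys ! 0 = ys ! i" unfolding internal_iff by blast
    moreover have "i < length ys" "0 < length ys" using i by linarith+
    ultimately have "0 = i" using path_distinct[OF assms, of 0 i] by blast
    then show False using i by simp
  qed
  show "ys ! (length ys - 1) \<notin> internal ys"
  proof
    assume "ys ! (length ys - 1) \<in> internal ys"
    then obtain i where i: "0 < i" "i < length ys - 1" "ys ! (length ys - 1) = ys ! i" unfolding internal_iff by blast
    moreover have "i < length ys" "length ys - 1 < length ys" using i by linarith+
    ultimately have "length ys - 1 = i" using path_distinct[OF assms, of "length ys - 1" i] by blast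
    then show False using i by simp
  qed
qed

lemma avoid:
  assumes e: "strict_ear G ys" and p: "is_path G xs"
    and h: "hd xs \<notin> internal ys" "last xs \<notin> internal ys" and l: "length xs < length ys"
  shows "set xs \<inter> internal ys = {}"
proof (rule ccontr)
  assume "set xs \<inter> internal ys \<noteq> {}"
  then obtain j where j: "j < length xs" "xs ! j \<in> internal ys"
    by (metis disjoint_iff in_set_conv_nth)
  then obtain i where i: "0 < i" "i < length ys - 1" "xs ! j = ys ! i" unfolding internal_iff by blast
  have xne: "xs \<noteq> []" using j by auto
  have j0: "j \<noteq> 0" using h(1) j(2) xne by (metis hd_conv_nth)
  have jn: "j \<noteq> length xs - 1" using h(2) j(2) xne by (metis last_conv_nth)
  define zs1 where "zs1 = drop j xs"
  have p1: "is_path G zs1" unfolding zs1_def using path_drop[OF p j(1)] .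
  have h1: "hd zs1 = ys ! i" unfolding zs1_def using j(1) i(3) by (simp add: hd_drop_conv_nth)
  have l1: "1 < length zs1" unfolding zs1_def using j jn by simp
  have la1: "last zs1 \<notin> internal ys" unfolding zs1_def using h(2) j(1) by simp
  have z11: "zs1 ! 1 = xs ! Suc j" unfolding zs1_def using j jn by simp
  define zs2 where "zs2 = drop (length xs - Suc j) (rev xs)"
  have p2: "is_path G zs2" unfolding zs2_def using path_drop[OF path_rev[OF p], of "length xs - Suc j"] j by simp
  have h2: "hd zs2 = ys ! i" unfolding zs2_def using j(1) i(3)
    by (simp add: hd_drop_conv_nth rev_nth)
  have l2: "1 < length zs2" unfolding zs2_def using j j0 by simp
  have la2: "last zs2 \<notin> internal ys" unfolding zs2_def using h(1) j(1) xne
    by (simp add: last_rev)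
  have ix: "length xs - Suc (Suc (length xs - Suc j)) = j - 1" using j j0 by linarith
  have z21: "zs2 ! 1 = xs ! (j - 1)" unfolding zs2_def using j j0
    by (simp add: rev_nth ix)
  have ne: "xs ! Suc j \<noteq> xs ! (j - 1)"
  proof
    assume "xs ! Suc j = xs ! (j - 1)"
    then have "Suc j = j - 1" using path_distinct[OF p, of "Suc j" "j - 1"] j jn by simp
    then show False by simp
  qed
  have len1: "length zs1 - 1 = length xs - 1 - j" unfolding zs1_def by simp
  have len2: "length zs2 - 1 = j" unfolding zs2_def using j by simp
  have A: "(xs ! Suc j = ys ! Suc i \<and> length ys - 1 - i \<le> length xs - 1 - j) \<or> (xs ! Suc j = ys ! (i - 1) \<and> i \<le> length xs - 1 - j)"
    using reach_end[OF e p1 i(1,2) h1 l1 la1] unfolding z11 len1 .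
  have B: "(xs ! (j - 1) = ys ! Suc i \<and> length ys - 1 - i \<le> j) \<or> (xs ! (j - 1) = ys ! (i - 1) \<and> i \<le> j)"
    using reach_end[OF e p2 i(1,2) h2 l2 la2] unfolding z21 len2 .
  show False using A B
  proof (elim disjE conjE)
    assume "xs ! Suc j = ys ! Suc i" "xs ! (j - 1) = ys ! Suc i" then show False using ne by simp
  next
    assume "xs ! Suc j = ys ! (i - 1)" "xs ! (j - 1) = ys ! (i - 1)" then show False using ne by simp
  next
    assume "length ys - 1 - i \<le> length xs - 1 - j" "i \<le> j" then show False using l i j by linarith
  next
    assume "i \<le> length xs - 1 - j" "length ys - 1 - i \<le> j" then show False using l i j by linarith
  qed
qed

lemma WReach_alt:
  "u \<in> WReach s G \<pi> v \<longleftrightarrow> u \<in> verts G \<and> \<pi> u \<le> \<pi> v \<and>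
     (\<exists>zs. is_path G zs \<and> hd zs = v \<and> last zs = u \<and> length zs - 1 \<le> s \<and> (\<forall>w\<in>internal zs. \<pi> u < \<pi> w))"
proof -
  have "(\<exists>xs. is_path G xs \<and> hd xs = u \<and> last xs = v \<and> length xs - 1 \<le> s \<and> (\<forall>w\<in>internal xs. \<pi> u < \<pi> w))
      \<longleftrightarrow> (\<exists>zs. is_path G zs \<and> hd zs = v \<and> last zs = u \<and> length zs - 1 \<le> s \<and> (\<forall>w\<in>internal zs. \<pi> u < \<pi> w))"
  proof
    assume "\<exists>xs. is_path G xs \<and> hd xs = u \<and> last xs = v \<and> length xs - 1 \<le> s \<and> (\<forall>w\<in>internal xs. \<pi> u < \<pi> w)"
    then obtain xs where xs: "is_path G xs" "hd xs = u" "last xs = v" "length xs - 1 \<le> s" "\<forall>w\<in>internal xs. \<pi> u < \<pi> w" by blast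
    have ne: "xs \<noteq> []" using xs(1) unfolding is_path_def by simp
    show "\<exists>zs. is_path G zs \<and> hd zs = v \<and> last zs = u \<and> length zs - 1 \<le> s \<and> (\<forall>w\<in>internal zs. \<pi> u < \<pi> w)"
      using xs ne path_rev[OF xs(1)] by (intro exI[of _ "rev xs"]) (simp add: hd_rev last_rev internal_rev)
  next
    assume "\<exists>xs. is_path G xs \<and> hd xs = v \<and> last xs = u \<and> length xs - 1 \<le> s \<and> (\<forall>w\<in>internal xs. \<pi> u < \<pi> w)"
    then obtain xs where xs: "is_path G xs" "hd xs = v" "last xs = u" "length xs - 1 \<le> s" "\<forall>w\<in>internal xs. \<pi> u < \<pi> w" by blast
    have ne: "xs \<noteq> []" using xs(1) unfolding is_path_def by simp
    show "\<exists>zs. is_path G zs \<and> hd zs = u \<and> last zs = v \<and> length zs - 1 \<le> s \<and> (\<forall>w\<in>internal zs. \<pi> u < \<pi> w)"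
      using xs ne path_rev[OF xs(1)] by (intro exI[of _ "rev xs"]) (simp add: hd_rev last_rev internal_rev)
  qed
  then show ?thesis unfolding WReach_def by simp
qed

lemma WReach_sub: "WReach s G \<pi> v \<subseteq> verts G"
  unfolding WReach_def by (rule Collect_restrict)

lemma WReach_cong_sub:
  assumes eq: "\<forall>x\<in>verts H. \<pi> x = \<pi>' x" and v: "v \<in> verts H"
  shows "WReach s H \<pi> v \<subseteq> WReach s H \<pi>' v"
proof
  fix u assume "u \<in> WReach s H \<pi> v"
  then obtain xs where u: "u \<in> verts H" "\<pi> u \<le> \<pi> v" and xs: "is_path H xs" "hd xs = u" "last xs = v"
    "length xs - 1 \<le> s" "\<forall>w\<in>internal xs. \<pi> u < \<pi> w"
    unfolding WReach_def by blast
  have s1: "\<pi>' u \<le> \<pi>' v" using u eq v by simp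
  have s2: "\<forall>w\<in>internal xs. \<pi>' u < \<pi>' w"
  proof
    fix w assume w: "w \<in> internal xs"
    then have "w \<in> verts H" using internal_sub[of xs] xs(1) unfolding is_path_def by blast
    then have "\<pi> w = \<pi>' w" using eq by blast
    moreover have "\<pi> u = \<pi>' u" using eq u(1) by blast
    moreover have "\<pi> u < \<pi> w" using xs(5) w by blast
    ultimately show "\<pi>' u < \<pi>' w" by simp
  qed
  show "u \<in> WReach s H \<pi>' v" unfolding WReach_def
    using u(1) s1 s2 xs(1-4) by blast
qed

lemma WReach_cong:
  assumes "\<forall>x\<in>verts H. \<pi> x = \<pi>' x" "v \<in> verts H"
  shows "WReach s H \<pi> v = WReach s H \<pi>' v"
  using WReach_cong_sub[OF assms] WReach_cong_sub[of H \<pi>' \<pi> v s] assms by (simp add: subset_antisym)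

lemma old_sub:
  assumes big: "\<forall>x\<in>D. \<forall>y\<in>verts G - D. \<pi> y < \<pi> x" and x0: "x0 \<in> verts G - D"
    and av: "\<And>xs. is_path G xs \<Longrightarrow> hd xs \<notin> D \<Longrightarrow> last xs \<notin> D \<Longrightarrow> length xs - 1 \<le> s \<Longrightarrow> set xs \<inter> D = {}"
  shows "WReach s G \<pi> x0 \<subseteq> WReach s (del_verts G D) \<pi> x0"
proof
  fix u assume "u \<in> WReach s G \<pi> x0"
  then have "u \<in> verts G \<and> \<pi> u \<le> \<pi> x0 \<and> (\<exists>xs. is_path G xs \<and> hd xs = u \<and> last xs = x0 \<and> length xs - 1 \<le> s \<and> (\<forall>v\<in>internal xs. \<pi> u < \<pi> v))"
    unfolding WReach_def by simp
  then obtain xs where u: "u \<in> verts G" "\<pi> u \<le> \<pi> x0" and xs: "is_path G xs" "hd xs = u" "last xs = x0"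
    "length xs - 1 \<le> s" "\<forall>v\<in>internal xs. \<pi> u < \<pi> v"
    by blast
  have uD: "u \<notin> D"
  proof
    assume "u \<in> D" then have "\<pi> x0 < \<pi> u" using big x0 by blast
    then show False using u by simp
  qed
  have "set xs \<inter> D = {}" using av[OF xs(1)] xs(2,3,4) uD x0 by blast
  then have "is_path (del_verts G D) xs" using path_del[OF xs(1)] by blast
  then show "u \<in> WReach s (del_verts G D) \<pi> x0" unfolding WReach_def
    using u uD xs by (auto simp: verts_del)
qed




definition hq :: "nat \<Rightarrow> nat \<Rightarrow> nat" where "hq q s = (LEAST j. q \<le> 2 ^ j * (q - s))"
definition Fq :: "nat \<Rightarrow> nat \<Rightarrow> nat" where "Fq q s = s + 1 + hq q s"

lemma hq_ex: "s < q \<Longrightarrow> q \<le> 2 ^ q * (q - s)"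
proof -
  assume "s < q"
  have "q < 2 ^ q" by (rule less_exp)
  moreover have "2 ^ q \<le> 2 ^ q * (q - s)" using \<open>s < q\<close> by simp
  ultimately show ?thesis by linarith
qed

lemma hq_spec: "s < q \<Longrightarrow> q \<le> 2 ^ hq q s * (q - s)"
  unfolding hq_def by (rule LeastI_ex) (use hq_ex in blast)

lemma hq_le: "q \<le> 2 ^ j * (q - s) \<Longrightarrow> hq q s \<le> j"
  unfolding hq_def by (rule Least_le)

lemma hq0: "hq q 0 = 0"
  using hq_le[of q 0 0] by simp

lemma hq1: "0 < s \<Longrightarrow> s < q \<Longrightarrow> 1 \<le> hq q s"
proof (rule ccontr)
  assume a: "0 < s" "s < q" "\<not> 1 \<le> hq q s"
  then have "hq q s = 0" by simp
  then have "q \<le> q - s" using hq_spec[OF a(2)] by simp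
  then show False using a by simp
qed

lemma hq_mono: "s \<le> s' \<Longrightarrow> s' < q \<Longrightarrow> hq q s \<le> hq q s'"
proof -
  assume a: "s \<le> s'" "s' < q"
  have "q \<le> 2 ^ hq q s' * (q - s')" using hq_spec[OF a(2)] .
  also have "\<dots> \<le> 2 ^ hq q s' * (q - s)" using a by (intro mult_le_mono2) simp
  finally show ?thesis by (rule hq_le)
qed

lemma hq_step: "q \<le> 2 * s \<Longrightarrow> s < q \<Longrightarrow> hq q (2 * s - q) < hq q s"
proof -
  assume a: "q \<le> 2 * s" "s < q"
  have s0: "0 < s" using a by simp
  have j1: "1 \<le> hq q s" using hq1[OF s0 a(2)] .
  then obtain j where j: "hq q s = Suc j" by (cases "hq q s") auto
  have "q \<le> 2 ^ Suc j * (q - s)" using hq_spec[OF a(2)] j by simp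
  also have "\<dots> = 2 ^ j * (q - (2 * s - q))" using a by (simp add: algebra_simps)
  finally have "hq q (2 * s - q) \<le> j" by (rule hq_le)
  then show ?thesis using j by simp
qed

lemma Fq0: "Fq q 0 = 1" unfolding Fq_def by (simp add: hq0)

lemma leaf_arith: "0 < s \<Longrightarrow> s < q \<Longrightarrow> 1 + Fq q (s - 1) \<le> Fq q s"
  unfolding Fq_def using hq_mono[of "s - 1" s q] by simp

lemma side_arith:
  assumes "0 < k" "k < t" "q \<le> t" "s < q"
  shows "min s (k - 1) + 1 + (if t - k \<le> s then 1 else 0) + (if k \<le> s then Fq q (s - k) else 0) \<le> Fq q s"
proof (cases "k \<le> s")
  case True
  then have m: "min s (k - 1) = k - 1" by simp
  show ?thesis
  proof (cases "t - k \<le> s")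
    case True2: True
    have "q \<le> 2 * s" using assms True True2 by linarith
    then have "hq q (2 * s - q) < hq q s" using hq_step assms by blast
    moreover have "hq q (s - k) \<le> hq q (2 * s - q)" using assms True True2 by (intro hq_mono) linarith+
    ultimately show ?thesis using m True True2 assms unfolding Fq_def by simp
  next
    case False
    have "hq q (s - k) \<le> hq q s" using assms by (intro hq_mono) linarith+
    then show ?thesis using m True False assms unfolding Fq_def by simp
  qed
next
  case False
  then have m: "min s (k - 1) = s" by simp
  show ?thesis
  proof (cases "t - k \<le> s")
    case True
    then have "0 < s" using assms by linarith
    then have "1 \<le> hq q s" using hq1 assms by blast
    then show ?thesis using m True False unfolding Fq_def by simp
  next
    case F2: False
    show ?thesis using m F2 False unfolding Fq_def by simp
  qed
qed




lemma distinct_hd_not_tl: "distinct zs \<Longrightarrow> zs \<noteq> [] \<Longrightarrow> hd zs \<notin> set (drop 1 zs)"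
  by (cases zs) auto

lemma leaf_incl:
  assumes v: "v \<in> verts G"
  shows "WReach s G \<pi> v \<subseteq> insert v (if s = 0 then {} else
           \<Union>x\<in>{u \<in> verts G. adj G v u}. WReach (s - 1) (del_verts G {v}) \<pi> x)"
proof
  fix u assume "u \<in> WReach s G \<pi> v"
  then obtain zs where u: "u \<in> verts G" "\<pi> u \<le> \<pi> v" and zs: "is_path G zs" "hd zs = v" "last zs = u"
    "length zs - 1 \<le> s" "\<forall>w\<in>internal zs. \<pi> u < \<pi> w"
    unfolding WReach_alt by blast
  have zne: "zs \<noteq> []" using zs(1) unfolding is_path_def by simp
  show "u \<in> insert v (if s = 0 then {} else
           \<Union>x\<in>{u \<in> verts G. adj G v u}. WReach (s - 1) (del_verts G {v}) \<pi> x)"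
  proof (cases "length zs = 1")
    case True
    then have "u = v" using zs(2,3) zne by (cases zs) auto
    then show ?thesis by simp
  next
    case False
    then have l: "1 < length zs" using zne by (cases zs) auto
    then have s0: "s \<noteq> 0" using zs(4) by simp
    define x where "x = zs ! 1"
    have z0: "zs ! 0 = v" using zs(2) zne by (simp add: hd_conv_nth)
    have ax: "adj G v x" using path_adj[OF zs(1), of 0] l z0 x_def by simp
    have xv: "x \<in> verts G" using path_vert[OF zs(1), of 1] l x_def by simp
    define zz where "zz = drop 1 zs"
    have pz: "is_path G zz" unfolding zz_def using path_drop[OF zs(1)] l by simp
    have hzz: "hd zz = x" unfolding zz_def x_def using l by (simp add: hd_drop_conv_nth)
    have lzz: "last zz = u" unfolding zz_def using l zs(3) by simp
    have lenzz: "length zz - 1 \<le> s - 1" unfolding zz_def using zs(4) by simp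
    have vz: "v \<notin> set zz" unfolding zz_def using distinct_hd_not_tl[of zs] zs(1,2) zne
      unfolding is_path_def by blast
    have pz': "is_path (del_verts G {v}) zz" using path_del[OF pz, of "{v}"] vz by simp
    have uv: "u \<noteq> v"
    proof
      assume "u = v"
      then have "zs ! (length zs - 1) = zs ! 0" using zs(3) z0 zne by (simp add: last_conv_nth)
      moreover have "length zs - 1 < length zs" "0 < length zs" using l by auto
      ultimately have "length zs - 1 = 0" using path_distinct[OF zs(1), of "length zs - 1" 0] by blast
      then show False using l by simp
    qed
    have pux: "\<pi> u \<le> \<pi> x"
    proof (cases "u = x")
      case True then show ?thesis by simp
    next
      case False
      have "length zs \<noteq> 2"
      proof
        assume "length zs = 2"
        then have "u = zs ! 1" using zs(3) zne by (simp add: last_conv_nth)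
        then show False using False x_def by simp
      qed
      then have "x \<in> internal zs" unfolding x_def using l by (intro nth_internal) auto
      then show ?thesis using zs(5) by fastforce
    qed
    have "\<forall>w\<in>internal zz. \<pi> u < \<pi> w" using zs(5) internal_drop[of 1 zs] unfolding zz_def by blast
    then have "u \<in> WReach (s - 1) (del_verts G {v}) \<pi> x" unfolding WReach_alt
      using u uv pux pz' hzz lzz lenzz by (auto simp: verts_del)
    then show ?thesis using s0 ax xv by auto
  qed
qed

lemma leaf_card:
  assumes fin: "finite (verts G)" and v: "v \<in> verts G" and deg: "degree G v \<le> 1"
    and sq: "s < q"
    and IH: "\<And>x s'. x \<in> verts G - {v} \<Longrightarrow> s' \<le> s \<Longrightarrow> card (WReach s' (del_verts G {v}) \<pi> x) \<le> Fq q s'"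
  shows "card (WReach s G \<pi> v) \<le> Fq q s"
proof -
  let ?N = "{u \<in> verts G. adj G v u}"
  have finN: "finite ?N" using fin by simp
  have cN: "card ?N \<le> 1" using deg unfolding degree_def .
  have finW: "\<And>H x s. finite (verts H) \<Longrightarrow> finite (WReach s H \<pi> x)"
    using WReach_sub finite_subset by metis
  have fin': "finite (verts (del_verts G {v}))" using fin by (simp add: verts_del)
  show ?thesis
  proof (cases "s = 0 \<or> ?N = {}")
    case True
    then have e: "(if s = 0 then {} else \<Union>x\<in>?N. WReach (s - 1) (del_verts G {v}) \<pi> x) = {}"
      by auto
    have "WReach s G \<pi> v \<subseteq> {v}" using leaf_incl[OF v, of s \<pi>] unfolding e .
    then have "card (WReach s G \<pi> v) \<le> 1" using card_mono[of "{v}"] by fastforce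
    then show ?thesis unfolding Fq_def by simp
  next
    case False
    then obtain x where x: "?N = {x}" using cN finN
      by (metis (no_types, lifting) card_0_eq card_1_singletonE le_Suc_eq le_zero_eq One_nat_def)
    have xv: "x \<in> verts G - {v}" using x unfolding adj_def by auto
    have "WReach s G \<pi> v \<subseteq> insert v (WReach (s - 1) (del_verts G {v}) \<pi> x)"
      using leaf_incl[OF v, of s \<pi>] False x by simp
    then have "card (WReach s G \<pi> v) \<le> card (insert v (WReach (s - 1) (del_verts G {v}) \<pi> x))"
      using finW[OF fin'] by (intro card_mono) auto
    also have "\<dots> \<le> 1 + card (WReach (s - 1) (del_verts G {v}) \<pi> x)"
      using finW[OF fin'] by (simp add: card_insert_if)
    also have "\<dots> \<le> 1 + Fq q (s - 1)" using IH[OF xv, of "s - 1"] by simp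
    also have "\<dots> \<le> Fq q s" using leaf_arith[of s q] False sq by simp
    finally show ?thesis .
  qed
qed




lemma side_incl:
  assumes e: "strict_ear G ys" and t: "0 < t" "t < length ys - 1" and k: "0 < k" "k < t"
    and mono: "\<And>i j. 0 < i \<Longrightarrow> i < j \<Longrightarrow> j < t \<Longrightarrow> \<pi> (ys ! i) < \<pi> (ys ! j)"
    and sink: "\<And>i. 0 < i \<Longrightarrow> i < length ys - 1 \<Longrightarrow> i \<noteq> t \<Longrightarrow> \<pi> (ys ! t) < \<pi> (ys ! i)"
    and big: "\<forall>x\<in>internal ys. \<forall>y\<in>verts G - internal ys. \<pi> y < \<pi> x"
    and sl: "s < length ys - 1 - t"
  shows "WReach s G \<pi> (ys ! k) \<subseteq> (\<lambda>i. ys ! i) ` {k - min s (k - 1)..k} \<union> (if t - k \<le> s then {ys ! t} else {})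
     \<union> (if k \<le> s then WReach (s - k) (del_verts G (internal ys)) \<pi> (ys ! 0) else {})"
proof
  fix u assume "u \<in> WReach s G \<pi> (ys ! k)"
  then obtain zs where u: "u \<in> verts G" "\<pi> u \<le> \<pi> (ys ! k)" and zs: "is_path G zs" "hd zs = ys ! k" "last zs = u"
    "length zs - 1 \<le> s" "\<forall>w\<in>internal zs. \<pi> u < \<pi> w"
    unfolding WReach_alt by blast
  have py: "is_path G ys" using e unfolding strict_ear_def by simp
  have zne: "zs \<noteq> []" using zs(1) unfolding is_path_def by simp
  define n where "n = length zs - 1"
  have un: "u = zs ! n" using zs(3) zne unfolding n_def by (simp add: last_conv_nth)
  have ln: "n < length zs" using zne unfolding n_def by simp
  let ?R = "(\<lambda>i. ys ! i) ` {k - min s (k - 1)..k} \<union> (if t - k \<le> s then {ys ! t} else {})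
     \<union> (if k \<le> s then WReach (s - k) (del_verts G (internal ys)) \<pi> (ys ! 0) else {})"
  show "u \<in> ?R"
  proof (cases "n = 0")
    case True
    then have "u = ys ! k" using un zs(2) zne by (simp add: hd_conv_nth)
    then show ?thesis by auto
  next
    case False
    then have l: "1 < length zs" unfolding n_def by simp
    from dir[OF e zs(1) k(1) _ zs(2) l] t k
    have "(\<forall>j. j < length zs \<and> k + j < length ys \<longrightarrow> zs ! j = ys ! (k + j))
        \<or> (\<forall>j. j < length zs \<and> j \<le> k \<longrightarrow> zs ! j = ys ! (k - j))" by force
    then show ?thesis
    proof
      assume fw: "\<forall>j. j < length zs \<and> k + j < length ys \<longrightarrow> zs ! j = ys ! (k + j)"
      have kn: "k + n < length ys - 1" using sl zs(4) k unfolding n_def by linarith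
      have uk: "u = ys ! (k + n)" using fw ln kn un by simp
      have "k + n = t"
      proof (rule ccontr)
        assume ne: "k + n \<noteq> t"
        show False
        proof (cases "k + n < t")
          case True
          then have "\<pi> (ys ! k) < \<pi> (ys ! (k + n))" using mono[of k "k + n"] k False by simp
          then show False using u(2) uk by simp
        next
          case F2: False
          then have tk: "0 < t - k" "t - k < n" using ne k by linarith+
          have "t - k < length zs \<and> k + (t - k) < length ys" using tk ln t by linarith
          then have "zs ! (t - k) = ys ! (k + (t - k))" using fw by blast
          then have "zs ! (t - k) = ys ! t" using k by simp
          moreover have "zs ! (t - k) \<in> internal zs" using tk unfolding n_def by (intro nth_internal) auto
          ultimately have "\<pi> u < \<pi> (ys ! t)" using zs(5) by fastforce
          moreover have "\<pi> (ys ! t) < \<pi> u" using sink[of "k + n"] kn ne k uk by simp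
          ultimately show False by simp
        qed
      qed
      then have "u = ys ! t" "t - k \<le> s" using uk zs(4) unfolding n_def by auto
      then show ?thesis by simp
    next
      assume bw: "\<forall>j. j < length zs \<and> j \<le> k \<longrightarrow> zs ! j = ys ! (k - j)"
      show ?thesis
      proof (cases "n < k")
        case True
        then have "u = ys ! (k - n)" using bw ln un by simp
        moreover have "k - n \<in> {k - min s (k - 1)..k}" using True zs(4) unfolding n_def by auto
        ultimately show ?thesis by blast
      next
        case False
        then have ks: "k \<le> s" using zs(4) unfolding n_def by simp
        have zk: "zs ! k = ys ! 0" using bw False ln by simp
        define zz where "zz = drop k zs"
        have pz: "is_path G zz" unfolding zz_def using path_drop[OF zs(1)] False ln by simp
        have hzz: "hd zz = ys ! 0" unfolding zz_def using False ln zk by (simp add: hd_drop_conv_nth)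
        have lzz: "last zz = u" unfolding zz_def using False ln zs(3) by simp
        have lenzz: "length zz - 1 \<le> s - k" unfolding zz_def using zs(4) by simp
        have a_ni: "ys ! 0 \<notin> internal ys" using path_ends_not_internal[OF py] by simp
        have "0 < length ys" using t by linarith
        then have a_v: "ys ! 0 \<in> verts G" using path_vert[OF py, of 0] by blast
        have pua: "\<pi> u \<le> \<pi> (ys ! 0)"
        proof (cases "n = k")
          case True then show ?thesis using un zk by simp
        next
          case F2: False
          then have "zs ! k \<in> internal zs" using False k unfolding n_def by (intro nth_internal) auto
          then show ?thesis using zs(5) zk by fastforce
        qed
        have u_ni: "u \<notin> internal ys"
        proof
          assume ui: "u \<in> internal ys"
          show False
          proof (cases "n = k")
            case True then show False using un zk a_ni ui by simp
          next
            case F2: False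
            then have "zs ! k \<in> internal zs" using False k unfolding n_def by (intro nth_internal) auto
            then have "\<pi> u < \<pi> (ys ! 0)" using zs(5) zk by fastforce
            moreover have "\<pi> (ys ! 0) < \<pi> u" using big ui a_ni a_v by blast
            ultimately show False by simp
          qed
        qed
        have "length zz < length ys" using lenzz sl t unfolding zz_def by simp
        then have "set zz \<inter> internal ys = {}" using avoid[OF e pz] hzz lzz a_ni u_ni by simp
        then have pz': "is_path (del_verts G (internal ys)) zz" using path_del[OF pz] by blast
        have "\<forall>w\<in>internal zz. \<pi> u < \<pi> w" using zs(5) internal_drop[of k zs] unfolding zz_def by blast
        then have "u \<in> WReach (s - k) (del_verts G (internal ys)) \<pi> (ys ! 0)" unfolding WReach_alt
          using u u_ni pua pz' hzz lzz lenzz by (auto simp: verts_del)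
        then show ?thesis using ks by simp
      qed
    qed
  qed
qed

lemma sink_incl:
  assumes e: "strict_ear G ys" and t: "0 < t" "t < length ys - 1"
    and sink: "\<And>i. 0 < i \<Longrightarrow> i < length ys - 1 \<Longrightarrow> i \<noteq> t \<Longrightarrow> \<pi> (ys ! t) < \<pi> (ys ! i)"
    and sl: "s < length ys - 1 - t" "s < t"
  shows "WReach s G \<pi> (ys ! t) \<subseteq> {ys ! t}"
proof
  fix u assume "u \<in> WReach s G \<pi> (ys ! t)"
  then obtain zs where u: "u \<in> verts G" "\<pi> u \<le> \<pi> (ys ! t)" and zs: "is_path G zs" "hd zs = ys ! t" "last zs = u"
    "length zs - 1 \<le> s" "\<forall>w\<in>internal zs. \<pi> u < \<pi> w"
    unfolding WReach_alt by blast
  have zne: "zs \<noteq> []" using zs(1) unfolding is_path_def by simp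
  define n where "n = length zs - 1"
  have un: "u = zs ! n" using zs(3) zne unfolding n_def by (simp add: last_conv_nth)
  have ln: "n < length zs" using zne unfolding n_def by simp
  show "u \<in> {ys ! t}"
  proof (cases "n = 0")
    case True
    then have "u = ys ! t" using un zs(2) zne by (simp add: hd_conv_nth)
    then show ?thesis by auto
  next
    case False
    then have l: "1 < length zs" unfolding n_def by simp
    from dir[OF e zs(1) t(1) t(2) zs(2) l]
    have "(\<forall>j. j < length zs \<and> t + j < length ys \<longrightarrow> zs ! j = ys ! (t + j))
        \<or> (\<forall>j. j < length zs \<and> j \<le> t \<longrightarrow> zs ! j = ys ! (t - j))" by blast
    then show ?thesis
    proof
      assume fw: "\<forall>j. j < length zs \<and> t + j < length ys \<longrightarrow> zs ! j = ys ! (t + j)"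
      have kn: "t + n < length ys - 1" using sl zs(4) unfolding n_def by linarith
      have "u = ys ! (t + n)" using fw ln kn un by simp
      moreover have "\<pi> (ys ! t) < \<pi> (ys ! (t + n))" using sink[of "t + n"] kn False t by simp
      ultimately show ?thesis using u(2) by simp
    next
      assume bw: "\<forall>j. j < length zs \<and> j \<le> t \<longrightarrow> zs ! j = ys ! (t - j)"
      have kn: "n < t" using sl zs(4) unfolding n_def by linarith
      have "u = ys ! (t - n)" using bw ln kn un by simp
      moreover have "\<pi> (ys ! t) < \<pi> (ys ! (t - n))" using sink[of "t - n"] kn False t by simp
      ultimately show ?thesis using u(2) by simp
    qed
  qed
qed




lemma side_card:
  assumes e: "strict_ear G ys" and t: "0 < t" "t < length ys - 1" and k: "0 < k" "k < t"
    and mono: "\<And>i j. 0 < i \<Longrightarrow> i < j \<Longrightarrow> j < t \<Longrightarrow> \<pi> (ys ! i) < \<pi> (ys ! j)"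
    and sink: "\<And>i. 0 < i \<Longrightarrow> i < length ys - 1 \<Longrightarrow> i \<noteq> t \<Longrightarrow> \<pi> (ys ! t) < \<pi> (ys ! i)"
    and big: "\<forall>x\<in>internal ys. \<forall>y\<in>verts G - internal ys. \<pi> y < \<pi> x"
    and sl: "s < length ys - 1 - t"
    and fin: "finite (verts G)" and qt: "q \<le> t" and sq: "s < q"
    and IHa: "k \<le> s \<Longrightarrow> card (WReach (s - k) (del_verts G (internal ys)) \<pi> (ys ! 0)) \<le> Fq q (s - k)"
  shows "card (WReach s G \<pi> (ys ! k)) \<le> Fq q s"
proof -
  let ?A = "(\<lambda>i. ys ! i) ` {k - min s (k - 1)..k}"
  let ?B = "(if t - k \<le> s then {ys ! t} else {})"
  let ?C = "(if k \<le> s then WReach (s - k) (del_verts G (internal ys)) \<pi> (ys ! 0) else {})"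
  have fin': "finite (verts (del_verts G (internal ys)))" using fin by (simp add: verts_del)
  have finC: "finite ?C" using finite_subset[OF WReach_sub fin'] by simp
  have cA: "card ?A \<le> min s (k - 1) + 1"
  proof -
    have "card ?A \<le> card {k - min s (k - 1)..k}" by (rule card_image_le) simp
    also have "\<dots> = min s (k - 1) + 1" using k by simp
    finally show ?thesis .
  qed
  have cB: "card ?B \<le> (if t - k \<le> s then 1 else 0)" by simp
  have cC: "card ?C \<le> (if k \<le> s then Fq q (s - k) else 0)" using IHa by simp
  have "card (WReach s G \<pi> (ys ! k)) \<le> card (?A \<union> ?B \<union> ?C)"
    using side_incl[OF e t k mono sink big sl] finC by (intro card_mono) auto
  also have "\<dots> \<le> card ?A + card ?B + card ?C"
    by (meson card_Un_le add_le_mono order_trans le_refl)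
  also have "\<dots> \<le> min s (k - 1) + 1 + (if t - k \<le> s then 1 else 0) + (if k \<le> s then Fq q (s - k) else 0)"
    using cA cB cC by linarith
  also have "\<dots> \<le> Fq q s" using side_arith[OF k(1) k(2) qt sq] .
  finally show ?thesis .
qed

lemma finite_WReach: "finite (verts H) \<Longrightarrow> finite (WReach s H \<pi> v)"
  by (rule finite_subset[OF WReach_sub])

lemma leaf_step:
  assumes wf: "wf_graph G" and v: "v \<in> verts G" and deg: "degree G v \<le> 1" and rq: "r < q"
    and inj: "inj_on \<pi>' (verts (del_verts G {v}))"
    and IH: "\<forall>w\<in>verts (del_verts G {v}). \<forall>s\<le>r. card (WReach s (del_verts G {v}) \<pi>' w) \<le> Fq q s"
  shows "\<exists>\<pi>. inj_on \<pi> (verts G) \<and> (\<forall>w\<in>verts G. \<forall>s\<le>r. card (WReach s G \<pi> w) \<le> Fq q s)"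
proof -
  let ?G' = "del_verts G {v}"
  have fin: "finite (verts G)" using wf unfolding wf_graph_def by simp
  have fin': "finite (verts ?G')" using fin by (simp add: verts_del)
  define N where "N = Suc (Max (\<pi>' ` verts ?G'))"
  have bigN: "\<forall>y\<in>verts ?G'. \<pi>' y < N" unfolding N_def using fin' by (simp add: le_imp_less_Suc)
  define \<pi> where "\<pi> = (\<lambda>x. if x = v then N else \<pi>' x)"
  have eq: "\<forall>x\<in>verts ?G'. \<pi> x = \<pi>' x" unfolding \<pi>_def by (simp add: verts_del)
  have IH2: "\<forall>w\<in>verts ?G'. \<forall>s\<le>r. card (WReach s ?G' \<pi> w) \<le> Fq q s"
    using IH WReach_cong[OF eq] by simp
  have big: "\<forall>x\<in>{v}. \<forall>y\<in>verts G - {v}. \<pi> y < \<pi> x"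
    using bigN unfolding \<pi>_def by (simp add: verts_del)
  have injG': "inj_on \<pi> (verts ?G')" using inj inj_on_cong[of "verts ?G'" \<pi> \<pi>'] eq by blast
  have vG: "verts G = insert v (verts ?G')" using v by (auto simp: verts_del)
  have "\<pi> v \<notin> \<pi> ` (verts ?G' - {v})" using big by (auto simp: verts_del)
  then have injG: "inj_on \<pi> (verts G)" unfolding vG using injG' by (simp add: inj_on_insert)
  have "\<forall>w\<in>verts G. \<forall>s\<le>r. card (WReach s G \<pi> w) \<le> Fq q s"
  proof (intro ballI allI impI)
    fix w s assume w: "w \<in> verts G" and s: "s \<le> r"
    show "card (WReach s G \<pi> w) \<le> Fq q s"
    proof (cases "w = v")
      case True
      have "card (WReach s G \<pi> v) \<le> Fq q s"
      proof (rule leaf_card[OF fin v deg])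
        show "s < q" using s rq by simp
        fix x s' assume "x \<in> verts G - {v}" "s' \<le> s"
        then show "card (WReach s' (del_verts G {v}) \<pi> x) \<le> Fq q s'" using IH2 s by (simp add: verts_del)
      qed
      then show ?thesis using True by simp
    next
      case False
      have av: "set xs \<inter> {v} = {}" if p: "is_path G xs" "hd xs \<notin> {v}" "last xs \<notin> {v}" for xs
      proof (rule ccontr)
        assume "set xs \<inter> {v} \<noteq> {}"
        then have "v \<in> set xs" by blast
        then obtain j where j: "j < length xs" "xs ! j = v" by (auto simp: in_set_conv_nth)
        have xne: "xs \<noteq> []" using j by auto
        have "j \<noteq> 0"
        proof
          assume "j = 0" then have "hd xs = v" using j xne by (simp add: hd_conv_nth)
          then show False using p(2) by simp
        qed
        moreover have "j \<noteq> length xs - 1"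
        proof
          assume "j = length xs - 1" then have "last xs = v" using j xne by (simp add: last_conv_nth)
          then show False using p(3) by simp
        qed
        ultimately have j1: "0 < j" "j < length xs - 1" using j by linarith+
        have "degree G (xs ! j) \<ge> 2" using deg_ge2[OF fin p(1) j1] .
        then show False using deg j by simp
      qed
      have "WReach s G \<pi> w \<subseteq> WReach s ?G' \<pi> w"
        using old_sub[OF big, of w s] av w False by blast
      then have "card (WReach s G \<pi> w) \<le> card (WReach s ?G' \<pi> w)"
        using finite_WReach[OF fin'] by (intro card_mono) auto
      also have "\<dots> \<le> Fq q s" using IH2 w False s by (simp add: verts_del)
      finally show ?thesis .
    qed
  qed
  then show ?thesis using injG by blast
qed




lemma f_inj:
  fixes i j q L :: nat
  assumes "(if i < q then 2*i else if i = q then 0 else 2*(L-i)+1) = (if j < q then 2*j else if j = q then 0 else 2*(L-j)+1)"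
    "0 < i" "i < L" "0 < j" "j < L"
  shows "i = j"
  using assms by (split if_split_asm; split if_split_asm; split if_split_asm; split if_split_asm; presburger)

lemma Fq_pos: "1 \<le> Fq q s" unfolding Fq_def by simp

lemma ear_step:
  assumes wf: "wf_graph G" and e: "strict_ear G ys" and Lq: "2 * q \<le> length ys - 1" and rq: "r < q"
    and inj: "inj_on \<pi>' (verts (del_verts G (internal ys)))"
    and IH: "\<forall>w\<in>verts (del_verts G (internal ys)). \<forall>s\<le>r. card (WReach s (del_verts G (internal ys)) \<pi>' w) \<le> Fq q s"
  shows "\<exists>\<pi>. inj_on \<pi> (verts G) \<and> (\<forall>w\<in>verts G. \<forall>s\<le>r. card (WReach s G \<pi> w) \<le> Fq q s)"
proof -
  let ?D = "internal ys"
  let ?G' = "del_verts G ?D"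
  define L where "L = length ys - 1"
  have py: "is_path G ys" using e unfolding strict_ear_def by simp
  have dys: "distinct ys" using py unfolding is_path_def by simp
  have ysV: "set ys \<subseteq> verts G" using py unfolding is_path_def by simp
  have fin: "finite (verts G)" using wf unfolding wf_graph_def by simp
  have fin': "finite (verts ?G')" using fin by (simp add: verts_del)
  have q0: "0 < q" using rq by simp
  have Lq': "2 * q \<le> L" using Lq unfolding L_def .
  have lys: "length ys = Suc L" using Lq q0 unfolding L_def by simp
  define N where "N = Suc (Max (\<pi>' ` verts ?G'))"
  have bigN: "\<forall>y\<in>verts ?G'. \<pi>' y < N" unfolding N_def using fin' by (simp add: le_imp_less_Suc)
  define idx where "idx x = (THE i. i < length ys \<and> ys ! i = x)" for x
  have idx: "idx (ys ! i) = i" if "i < length ys" for i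
    unfolding idx_def using that nth_eq_iff_index_eq[OF dys] by (intro the_equality) auto
  define f where "f i = (if i < q then 2*i else if i = q then 0 else 2*(L-i)+1)" for i
  define \<pi> where "\<pi> x = (if x \<in> ?D then N + f (idx x) else \<pi>' x)" for x
  have inD: "ys ! i \<in> ?D" if "0 < i" "i < L" for i using nth_internal that unfolding L_def by blast
  have \<pi>ys: "\<pi> (ys ! i) = N + f i" if "0 < i" "i < L" for i
    unfolding \<pi>_def using inD[OF that] idx[of i] that lys by simp
  have Dform: "\<exists>i. 0 < i \<and> i < L \<and> x = ys ! i" if "x \<in> ?D" for x
    using that unfolding internal_iff L_def by blast
  have eq: "\<forall>x\<in>verts ?G'. \<pi> x = \<pi>' x" unfolding \<pi>_def by (simp add: verts_del)
  have IH2: "\<forall>w\<in>verts ?G'. \<forall>s\<le>r. card (WReach s ?G' \<pi> w) \<le> Fq q s"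
    using IH WReach_cong[OF eq] by simp
  have big: "\<forall>x\<in>?D. \<forall>y\<in>verts G - ?D. \<pi> y < \<pi> x"
  proof (intro ballI)
    fix x y assume x: "x \<in> ?D" and y: "y \<in> verts G - ?D"
    have "\<pi> y = \<pi>' y" using y unfolding \<pi>_def by simp
    also have "\<dots> < N" using bigN y by (simp add: verts_del)
    also have "N \<le> \<pi> x" using x unfolding \<pi>_def by simp
    finally show "\<pi> y < \<pi> x" .
  qed
  have injG: "inj_on \<pi> (verts G)"
  proof (rule inj_onI)
    fix x y assume x: "x \<in> verts G" and y: "y \<in> verts G" and exy: "\<pi> x = \<pi> y"
    show "x = y"
    proof (cases "x \<in> ?D")
      case True
      show ?thesis
      proof (cases "y \<in> ?D")
        case True2: True
        obtain i where i: "0 < i" "i < L" "x = ys ! i" using Dform[OF True] by blast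
        obtain j where j: "0 < j" "j < L" "y = ys ! j" using Dform[OF True2] by blast
        have "f i = f j" using exy \<pi>ys[OF i(1,2)] \<pi>ys[OF j(1,2)] i(3) j(3) by simp
        then have "i = j" using f_inj[of i q L j] i j unfolding f_def by blast
        then show ?thesis using i j by simp
      next
        case False
        then have "\<pi> y < \<pi> x" using big True y by blast
        then show ?thesis using exy by simp
      qed
    next
      case False
      show ?thesis
      proof (cases "y \<in> ?D")
        case True
        then have "\<pi> x < \<pi> y" using big False x by blast
        then show ?thesis using exy by simp
      next
        case False2: False
        have "\<pi>' x = \<pi>' y" using exy False False2 unfolding \<pi>_def by simp
        then show ?thesis using inj x y False False2 unfolding inj_on_def by (simp add: verts_del)
      qed
    qed
  qed
  have m0: "ys ! 0 \<in> set ys" "ys ! L \<in> set ys" using lys by (intro nth_mem; simp)+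
  have endsG': "ys ! 0 \<in> verts ?G'" "ys ! L \<in> verts ?G'"
    using path_ends_not_internal[OF py] ysV m0 lys unfolding L_def by (auto simp: verts_del)
  have "\<forall>w\<in>verts G. \<forall>s\<le>r. card (WReach s G \<pi> w) \<le> Fq q s"
  proof (intro ballI allI impI)
    fix w s assume w: "w \<in> verts G" and s: "s \<le> r"
    have sq: "s < q" using s rq by simp
    show "card (WReach s G \<pi> w) \<le> Fq q s"
    proof (cases "w \<in> ?D")
      case False
      have av: "set xs \<inter> ?D = {}" if p: "is_path G xs" "hd xs \<notin> ?D" "last xs \<notin> ?D" "length xs - 1 \<le> s" for xs
      proof -
        have "length xs < length ys" using p(4) sq Lq' lys by linarith
        then show ?thesis using avoid[OF e p(1) p(2) p(3)] by blast
      qed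
      have "WReach s G \<pi> w \<subseteq> WReach s ?G' \<pi> w"
        using old_sub[OF big, of w s] av w False by blast
      then have "card (WReach s G \<pi> w) \<le> card (WReach s ?G' \<pi> w)"
        using finite_WReach[OF fin'] by (intro card_mono) auto
      also have "\<dots> \<le> Fq q s" using IH2 w False s by (simp add: verts_del)
      finally show ?thesis .
    next
      case True
      obtain k where k: "0 < k" "k < L" "w = ys ! k" using Dform[OF True] by blast
      consider (a) "k < q" | (m) "k = q" | (b) "q < k" by linarith
      then show ?thesis
      proof cases
        case a
        have "card (WReach s G \<pi> (ys ! k)) \<le> Fq q s"
        proof (rule side_card[OF e, of q k \<pi> s])
          show "0 < q" "q < length ys - 1" using q0 Lq' unfolding L_def by linarith+
          show "0 < k" "k < q" using k a by auto
          show "\<pi> (ys ! i) < \<pi> (ys ! j)" if "0 < i" "i < j" "j < q" for i j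
            using \<pi>ys[of i] \<pi>ys[of j] that Lq' unfolding f_def by simp
          show "\<pi> (ys ! q) < \<pi> (ys ! i)" if "0 < i" "i < length ys - 1" "i \<noteq> q" for i
            using \<pi>ys[of i] \<pi>ys[of q] that Lq' q0 unfolding f_def L_def by simp
          show "\<forall>x\<in>internal ys. \<forall>y\<in>verts G - internal ys. \<pi> y < \<pi> x" by (rule big)
          show "s < length ys - 1 - q" using sq Lq' unfolding L_def by linarith
          show "finite (verts G)" "q \<le> q" "s < q" using fin sq by auto
          show "card (WReach (s - k) ?G' \<pi> (ys ! 0)) \<le> Fq q (s - k)"
            using IH2 endsG' s by simp
        qed
        then show ?thesis using k by simp
      next
        case m
        have "WReach s G \<pi> (ys ! q) \<subseteq> {ys ! q}"
        proof (rule sink_incl[OF e])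
          show "0 < q" "q < length ys - 1" using q0 Lq' unfolding L_def by linarith+
          show "\<pi> (ys ! q) < \<pi> (ys ! i)" if "0 < i" "i < length ys - 1" "i \<noteq> q" for i
            using \<pi>ys[of i] \<pi>ys[of q] that Lq' q0 unfolding f_def L_def by simp
          show "s < length ys - 1 - q" "s < q" using sq Lq' unfolding L_def by linarith+
        qed
        then have "card (WReach s G \<pi> (ys ! q)) \<le> card {ys ! q}" by (intro card_mono) auto
        then show ?thesis using k m Fq_pos[of q s] by simp
      next
        case b
        define zs where "zs = rev ys"
        have ez: "strict_ear G zs" unfolding zs_def using strict_ear_rev[OF e] .
        have lzs: "length zs = Suc L" unfolding zs_def using lys by simp
        have izs: "internal zs = ?D" unfolding zs_def by (rule internal_rev)
        have zsn: "zs ! i = ys ! (L - i)" if "i \<le> L" for i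
          unfolding zs_def using that lys by (simp add: rev_nth)
        have "card (WReach s G \<pi> (zs ! (L - k))) \<le> Fq q s"
        proof (rule side_card[OF ez, of "L - q" "L - k" \<pi> s])
          show "0 < L - q" "L - q < length zs - 1" using q0 Lq' lzs by linarith+
          show "0 < L - k" "L - k < L - q" using k b by auto
          show "\<pi> (zs ! i) < \<pi> (zs ! j)" if "0 < i" "i < j" "j < L - q" for i j
          proof -
            have "zs ! i = ys ! (L - i)" "zs ! j = ys ! (L - j)" using zsn that by auto
            moreover have "f (L - i) = 2 * i + 1" "f (L - j) = 2 * j + 1" unfolding f_def using that by auto
            moreover have "\<pi> (ys ! (L - i)) = N + f (L - i)" "\<pi> (ys ! (L - j)) = N + f (L - j)"
              using \<pi>ys[of "L - i"] \<pi>ys[of "L - j"] that by auto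
            ultimately show ?thesis using that by simp
          qed
          show "\<pi> (zs ! (L - q)) < \<pi> (zs ! i)" if "0 < i" "i < length zs - 1" "i \<noteq> L - q" for i
          proof -
            have "zs ! (L - q) = ys ! q" using zsn[of "L - q"] Lq' by simp
            moreover have "zs ! i = ys ! (L - i)" using zsn that lzs by simp
            moreover have "\<pi> (ys ! q) = N" using \<pi>ys[of q] q0 Lq' unfolding f_def by simp
            moreover have "0 < f (L - i)" using that lzs Lq' unfolding f_def by auto
            moreover have "\<pi> (ys ! (L - i)) = N + f (L - i)" using \<pi>ys[of "L - i"] that lzs by simp
            ultimately show ?thesis by simp
          qed
          show "\<forall>x\<in>internal zs. \<forall>y\<in>verts G - internal zs. \<pi> y < \<pi> x" using big izs by simp
          show "s < length zs - 1 - (L - q)" using sq Lq' lzs by linarith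
          show "finite (verts G)" "q \<le> L - q" "s < q" using fin sq Lq' by auto
          show "card (WReach (s - (L - k)) (del_verts G (internal zs)) \<pi> (zs ! 0)) \<le> Fq q (s - (L - k))"
            using IH2 endsG' s izs zsn[of 0] by simp
        qed
        moreover have "zs ! (L - k) = ys ! k" using zsn[of "L - k"] k by simp
        ultimately show ?thesis using k by simp
      qed
    qed
  qed
  then show ?thesis using injG by blast
qed




lemma red_del: "p_reduction p G G' \<Longrightarrow> \<exists>S. G' = del_verts G S"
  by (induction rule: p_reduction.induct) auto

lemma main_red:
  "(p_reduction (2 * q))\<^sup>*\<^sup>* G H \<Longrightarrow> H = ({}, {}) \<Longrightarrow> wf_graph G \<Longrightarrow> r < q \<Longrightarrow>
    \<exists>\<pi>. inj_on \<pi> (verts G) \<and> (\<forall>v\<in>verts G. \<forall>s\<le>r. card (WReach s G \<pi> v) \<le> Fq q s)"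
proof (induction G rule: converse_rtranclp_induct)
  case base
  then have "verts H = {}" by (simp add: verts_def)
  then show ?case by (intro exI[of _ "\<lambda>x. 0"]) simp
next
  case (step G G')
  obtain S where S: "G' = del_verts G S" using red_del[OF step.hyps(1)] by blast
  have wf': "wf_graph G'" using wf_del[OF step.prems(2)] S by simp
  obtain \<pi>' where \<pi>': "inj_on \<pi>' (verts G')" "\<forall>v\<in>verts G'. \<forall>s\<le>r. card (WReach s G' \<pi>' v) \<le> Fq q s"
    using step.IH[OF step.prems(1) wf' step.prems(3)] by blast
  from step.hyps(1) show ?case
  proof (cases rule: p_reduction.cases)
    case (isolated v)
    show ?thesis using leaf_step[OF step.prems(2) isolated(2), of r q \<pi>'] isolated \<pi>' step.prems(3) by simp
  next
    case (leaf v)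
    show ?thesis using leaf_step[OF step.prems(2) leaf(2), of r q \<pi>'] leaf \<pi>' step.prems(3) by simp
  next
    case (ear xs)
    show ?thesis using ear_step[OF step.prems(2) ear(2), of q r \<pi>'] ear \<pi>' step.prems(3) by simp
  qed
qed

lemma wcol_bound:
  assumes "wf_graph G" "p_path_degenerate (2 * q) G" "r < q"
  shows "wcol r G \<le> Fq q r"
proof -
  obtain \<pi> where \<pi>: "inj_on \<pi> (verts G)" "\<forall>v\<in>verts G. \<forall>s\<le>r. card (WReach s G \<pi> v) \<le> Fq q s"
    using main_red[of q G "({}, {})" r] assms unfolding p_path_degenerate_def by blast
  have "\<exists>\<pi>. inj_on \<pi> (verts G) \<and> (\<forall>v \<in> verts G. card (WReach r G \<pi> v) \<le> Fq q r)"
    using \<pi> by blast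
  then show ?thesis unfolding wcol_def by (rule Least_le)
qed

lemma hq_log:
  assumes "0 < r" "r < q"
  shows "int (hq q r) \<le> 1 + \<lfloor>log 2 (real (q - 1) / real (q - r))\<rfloor>"
proof -
  have "1 \<le> hq q r" using hq1 assms by blast
  then obtain j where j: "hq q r = Suc j" by (cases "hq q r") auto
  have "\<not> q \<le> 2 ^ j * (q - r)"
  proof
    assume "q \<le> 2 ^ j * (q - r)"
    then have "hq q r \<le> j" by (rule hq_le)
    then show False using j by simp
  qed
  then have n: "2 ^ j * (q - r) \<le> q - 1" by linarith
  have "real (2 ^ j * (q - r)) \<le> real (q - 1)" using n by (simp only: of_nat_le_iff)
  then have n2: "2 ^ j * real (q - r) \<le> real (q - 1)" by simp
  have pos: "0 < real (q - r)" using assms by simp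
  have n3: "2 ^ j \<le> real (q - 1) / real (q - r)" using n2 pos by (simp add: pos_le_divide_eq)
  have xpos: "0 < real (q - 1) / real (q - r)" using assms pos by simp
  have "real j \<le> log 2 (real (q - 1) / real (q - r))"
    using n3 xpos by (simp add: le_log_iff powr_realpow)
  then have "int j \<le> \<lfloor>log 2 (real (q - 1) / real (q - r))\<rfloor>" by (simp add: le_floor_iff)
  then show ?thesis using j by simp
qed

lemma hq_2r: "0 < r \<Longrightarrow> hq (2 * r) r = 1"
proof -
  assume r: "0 < r"
  have "hq (2 * r) r \<le> 1" by (rule hq_le) simp
  moreover have "1 \<le> hq (2 * r) r" using hq1[of r "2 * r"] r by simp
  ultimately show ?thesis by simp
qed

theorem mainTheorem19:
  fixes C :: "'a graph set" and g :: "nat \<Rightarrow> nat" and r :: nat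
  assumes graphs: "\<forall>G \<in> C. wf_graph G"
    and r: "r \<ge> 1"
    and subexp: "subexp_expansion C"
    and g: "\<forall>p \<ge> 2. \<forall>G \<in> C. enat (g p) \<le> girth G \<longrightarrow> p_path_degenerate p G"
  shows "\<forall>G \<in> C.
     (\<forall>q::nat. r < q \<and> q < 2 * r \<and> enat (g (2 * q)) \<le> girth G \<longrightarrow>
        int (wcol r G) \<le> int r + 2 + \<lfloor>log 2 (real (q - 1) / real (q - r))\<rfloor>) \<and>
     (enat (g (4 * r)) \<le> girth G \<longrightarrow> wcol r G \<le> r + 2)"
proof (intro ballI conjI allI impI)
  fix G assume G: "G \<in> C"
  have wf: "wf_graph G" using graphs G by blast
  {
    fix q :: nat assume q: "r < q \<and> q < 2 * r \<and> enat (g (2 * q)) \<le> girth G"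
    have "2 \<le> 2 * q" using q by simp
    then have pd: "p_path_degenerate (2 * q) G" using g G q by blast
    have "wcol r G \<le> Fq q r" using wcol_bound[OF wf pd] q by simp
    then have "int (wcol r G) \<le> int r + 1 + int (hq q r)" unfolding Fq_def by simp
    also have "\<dots> \<le> int r + 2 + \<lfloor>log 2 (real (q - 1) / real (q - r))\<rfloor>"
      using hq_log[of r q] q r by simp
    finally show "int (wcol r G) \<le> int r + 2 + \<lfloor>log 2 (real (q - 1) / real (q - r))\<rfloor>" .
  }
  {
    assume gi: "enat (g (4 * r)) \<le> girth G"
    have e4: "4 * r = 2 * (2 * r)" by simp
    have "2 \<le> 4 * r" using r by simp
    then have pd: "p_path_degenerate (2 * (2 * r)) G" using g G gi e4 by metis
    have "r < 2 * r" using r by simp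
    then have "wcol r G \<le> Fq (2 * r) r" using wcol_bound[OF wf pd] by simp
    then show "wcol r G \<le> r + 2" using hq_2r[of r] r unfolding Fq_def by simp
  }
qed


end
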